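(* Let $\phi$ satisfy $\phi'(z)\in[\gamma,1]$ for all $z$ ($\gamma\in(0,1]$), let $C_R=10R^2\gamma^{-2}+10$, and suppose $\|x_i\|^2\ge5\gamma^{-2}C_Rn\max_{k\ne i}|\langle x_i,x_k\rangle|$ for all $i\in[n]$. Then for every $W\in\mathbb{R}^{m\times d}$, $$\|\nabla\hat L(W)\|_F\ge\frac{\gamma R_{\min}}{2\sqrt2R\sqrt n}\hat G(W).$$
   Context: Network $f(x;W)=\sum_{j=1}^ma_j\phi(\langle w_j,x\rangle)$, $a_j\in\{\pm1/\sqrt m\}$. Logistic loss $\ell(z)=\log(1+e^{-z})$, $\hat L(W)=\frac1n\sum_i\ell(y_if(x_i;W))$, $\hat G(W)=\frac1n\sum_i1/(1+e^{y_if(x_i;W)})$. $R_{\max}=\max_i\|x_i\|$, $R_{\min}=\min_i\|x_i\|>0$, $R=R_{\max}/R_{\min}$. *)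

theory Defs
  imports "HOL-Analysis.Analysis"
begin

definition logistic_loss :: "real \<Rightarrow> real" where
  "logistic_loss z = ln (1 + exp (- z))"

definition net :: "(real \<Rightarrow> real) \<Rightarrow> ('m::finite \<Rightarrow> real) \<Rightarrow> real^'d^'m \<Rightarrow> real^'d \<Rightarrow> real" where
  "net \<phi> a W x = (\<Sum>j\<in>UNIV. a j * \<phi> ((W $ j) \<bullet> x))"

definition emp_loss :: "(real \<Rightarrow> real) \<Rightarrow> ('m::finite \<Rightarrow> real) \<Rightarrow> nat \<Rightarrow> (nat \<Rightarrow> real^'d) \<Rightarrow> (nat \<Rightarrow> real) \<Rightarrow> real^'d^'m \<Rightarrow> real" where
  "emp_loss \<phi> a n x y W = (1 / real n) * (\<Sum>i<n. logistic_loss (y i * net \<phi> a W (x i)))"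

definition emp_G :: "(real \<Rightarrow> real) \<Rightarrow> ('m::finite \<Rightarrow> real) \<Rightarrow> nat \<Rightarrow> (nat \<Rightarrow> real^'d) \<Rightarrow> (nat \<Rightarrow> real) \<Rightarrow> real^'d^'m \<Rightarrow> real" where
  "emp_G \<phi> a n x y W = (1 / real n) * (\<Sum>i<n. 1 / (1 + exp (y i * net \<phi> a W (x i))))"

definition Rmax :: "nat \<Rightarrow> (nat \<Rightarrow> real^'d) \<Rightarrow> real" where
  "Rmax n x = Max ((\<lambda>i. norm (x i)) ` {..<n})"

definition Rmin :: "nat \<Rightarrow> (nat \<Rightarrow> real^'d) \<Rightarrow> real" where
  "Rmin n x = Min ((\<lambda>i. norm (x i)) ` {..<n})"

end

theory Submission
  imports Defs
begin

lemma quad_lower: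
  fixes v :: "nat \<Rightarrow> 'a::real_inner" and c :: "nat \<Rightarrow> real" and K :: real
  assumes K: "K \<ge> 2" and n: "n \<ge> 1"
    and hyp: "\<And>i k. i<n \<Longrightarrow> k<n \<Longrightarrow> k\<noteq>i \<Longrightarrow> \<bar>v i \<bullet> v k\<bar> * (K * real n) \<le> (norm (v i))\<^sup>2"
  shows "(norm (\<Sum>i<n. c i *\<^sub>R v i))\<^sup>2 \<ge> (1/2) * (\<Sum>i<n. (c i)\<^sup>2 * (norm (v i))\<^sup>2)"
proof -
  define A where "A i = (c i)\<^sup>2 * (norm (v i))\<^sup>2" for i
  define b where "b i k = (if i = k then A i else 0) - (A i + A k) / (2 * K * real n)" for i k
  have Kn: "K * real n > 0" using K n by simp
  have Kne: "K \<noteq> 0" "real n \<noteq> 0" using K n by auto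
  have A0: "A i \<ge> 0" for i unfolding A_def by simp
  have eq: "(norm (\<Sum>i<n. c i *\<^sub>R v i))\<^sup>2 = (\<Sum>i<n. \<Sum>k<n. c i * c k * (v i \<bullet> v k))"
    by (simp add: power2_norm_eq_inner inner_sum_left inner_sum_right sum_distrib_left mult_ac inner_commute)
  have tm: "c i * c k * (v i \<bullet> v k) \<ge> b i k" if "i < n" "k < n" for i k
  proof (cases "i = k")
    case True
    have "c i * c i * (v i \<bullet> v i) = A i" unfolding A_def by (simp add: power2_norm_eq_inner[symmetric] power2_eq_square)
    moreover have "(A i + A i) / (2 * K * real n) \<ge> 0" using A0 Kn by simp
    ultimately show ?thesis using True unfolding b_def by simp
  next
    case False
    define t where "t = \<bar>v i \<bullet> v k\<bar>"
    have t0: "t \<ge> 0" unfolding t_def by simp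
    have t1: "t * (K * real n) \<le> (norm (v i))\<^sup>2" using hyp[OF that False[symmetric]] t_def by simp
    have t2: "t * (K * real n) \<le> (norm (v k))\<^sup>2" using hyp[OF that(2,1) False] t_def by (simp add: inner_commute)
    have "2 * \<bar>c i\<bar> * \<bar>c k\<bar> * t \<le> ((c i)\<^sup>2 + (c k)\<^sup>2) * t"
    proof -
      have "0 \<le> (\<bar>c i\<bar> - \<bar>c k\<bar>)\<^sup>2 * t" using t0 by simp
      then show ?thesis by (simp add: power2_eq_square algebra_simps)
    qed
    also have "\<dots> = ((c i)\<^sup>2 * (t * (K * real n)) + (c k)\<^sup>2 * (t * (K * real n))) / (K * real n)"
      using Kne by (simp add: field_simps)
    also have "\<dots> \<le> (A i + A k) / (K * real n)"
      unfolding A_def using Kn t1 t2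
      by (intro divide_right_mono add_mono mult_left_mono) auto
    finally have "\<bar>c i\<bar> * \<bar>c k\<bar> * t \<le> (A i + A k) / (2 * K * real n)"
      by (simp add: field_simps)
    moreover have "- (\<bar>c i\<bar> * \<bar>c k\<bar> * t) \<le> c i * c k * (v i \<bullet> v k)"
      unfolding t_def by (simp add: abs_mult[symmetric] abs_le_iff)
    ultimately show ?thesis unfolding b_def using False by simp
  qed
  have "(\<Sum>i<n. \<Sum>k<n. b i k) \<le> (\<Sum>i<n. \<Sum>k<n. c i * c k * (v i \<bullet> v k))"
    by (intro sum_mono tm) auto
  moreover have "(\<Sum>i<n. \<Sum>k<n. b i k) = (\<Sum>i<n. A i) * (1 - 1 / K)"
  proof -
    have "(\<Sum>i<n. \<Sum>k<n. b i k) = (\<Sum>i<n. A i) - (\<Sum>i<n. \<Sum>k<n. (A i + A k)) / (2 * K * real n)"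
      unfolding b_def by (simp add: sum_subtractf sum_divide_distrib[symmetric])
    also have "(\<Sum>i<n. \<Sum>k<n. (A i + A k)) = 2 * real n * (\<Sum>i<n. A i)"
      by (simp add: sum.distrib sum_distrib_left[symmetric] sum.swap[of "\<lambda>i k. A k"])
    finally show ?thesis using Kne by (simp add: field_simps)
  qed
  moreover have "(\<Sum>i<n. A i) * (1 - 1 / K) \<ge> (1/2) * (\<Sum>i<n. A i)"
  proof -
    have "1 - 1/K \<ge> 1/2" using K by (simp add: field_simps)
    moreover have "(\<Sum>i<n. A i) \<ge> 0" using A0 by (simp add: sum_nonneg)
    ultimately show ?thesis by (metis mult.commute mult_left_mono)
  qed
  ultimately show ?thesis unfolding eq A_def by linarith
qed


lemma logistic_deriv: "(logistic_loss has_real_derivative (-1/(1+exp z))) (at z)"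
proof -
  have "((\<lambda>z. ln (1 + exp (- z))) has_real_derivative (1/(1+exp(-z))) * (exp (-z) * -1)) (at z)"
    by (auto intro!: derivative_eq_intros simp: add_pos_pos)
  moreover have "(1/(1+exp(-z))) * (exp (-z) * -1) = -1/(1+exp z)"
    by (simp add: field_simps exp_minus add_pos_pos)
  ultimately show ?thesis unfolding logistic_loss_def[abs_def] by simp
qed

lemma inner_row_deriv: "((\<lambda>W::real^'d^'m. (W $ j) \<bullet> v) has_derivative (\<lambda>H. (H $ j) \<bullet> v)) F"
proof -
  have "bounded_linear (\<lambda>W::real^'d^'m. (W $ j) \<bullet> v)"
    using bounded_linear_compose[OF bounded_linear_inner_left bounded_linear_vec_nth] by blast
  then show ?thesis by (rule bounded_linear_imp_has_derivative)
qed

lemma net_deriv: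
  assumes deriv: "\<And>z. (\<phi> has_real_derivative \<phi>' z) (at z)"
  shows "((\<lambda>W. net \<phi> a W v) has_derivative
     (\<lambda>H. \<Sum>j\<in>UNIV. a j * ((H $ j) \<bullet> v * \<phi>' ((W $ j) \<bullet> v)))) (at W)"
  unfolding net_def
  apply (rule has_derivative_sum)
  apply (rule has_derivative_mult_right)
  apply (rule DERIV_compose_FDERIV[OF deriv])
  apply (rule inner_row_deriv)
  done

lemma loss_deriv:
  assumes deriv: "\<And>z. (\<phi> has_real_derivative \<phi>' z) (at z)"
  shows "(emp_loss \<phi> a n x y has_derivative
     (\<lambda>H. (1 / real n) * (\<Sum>i<n. (y i * (\<Sum>j\<in>UNIV. a j * ((H $ j) \<bullet> x i * \<phi>' ((W $ j) \<bullet> x i))))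
        * (-1/(1+exp (y i * net \<phi> a W (x i))))))) (at W)"
  unfolding emp_loss_def[abs_def]
  apply (rule has_derivative_mult_right)
  apply (rule has_derivative_sum)
  apply (rule DERIV_compose_FDERIV[OF logistic_deriv])
  apply (rule has_derivative_mult_right)
  apply (rule net_deriv[OF deriv])
  done

theorem mainTheorem14:
  fixes \<phi> \<phi>' :: "real \<Rightarrow> real" and \<gamma> :: real
    and a :: "'m::finite \<Rightarrow> real"
    and n :: nat and x :: "nat \<Rightarrow> real^'d" and y :: "nat \<Rightarrow> real"
    and W :: "real^'d^'m"
  assumes deriv: "\<And>z. (\<phi> has_real_derivative \<phi>' z) (at z)"
    and dbound: "\<And>z. \<gamma> \<le> \<phi>' z \<and> \<phi>' z \<le> 1"
    and gamma: "0 < \<gamma>" "\<gamma> \<le> 1"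
    and a_def: "\<And>j. a j = 1 / sqrt (real CARD('m)) \<or> a j = - 1 / sqrt (real CARD('m))"
    and labels: "\<And>i. i < n \<Longrightarrow> y i = 1 \<or> y i = -1"
    and n_pos: "n \<ge> 1"
    and Rmin_pos: "Rmin n x > 0"
    and sep: "\<And>i k. i < n \<Longrightarrow> k < n \<Longrightarrow> k \<noteq> i \<Longrightarrow>
       (norm (x i))\<^sup>2 \<ge> 5 * \<gamma> powr (-2) * (10 * (Rmax n x / Rmin n x)\<^sup>2 * \<gamma> powr (-2) + 10)
                          * real n * \<bar>x i \<bullet> x k\<bar>"
  shows "\<exists>G :: real^'d^'m. (emp_loss \<phi> a n x y has_derivative (\<lambda>H. G \<bullet> H)) (at W) \<and>
           norm G \<ge> \<gamma> * Rmin n x / (2 * sqrt 2 * (Rmax n x / Rmin n x) * sqrt (real n))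
                       * emp_G \<phi> a n x y W"
proof -
  define g where "g i = 1 / (1 + exp (y i * net \<phi> a W (x i)))" for i
  define d where "d i j = \<phi>' ((W $ j) \<bullet> x i)" for i j
  define c where "c j i = - (1 / real n) * g i * y i * a j * d i j" for j i
  define G :: "real^'d^'m" where "G = (\<chi> j. (\<Sum>i<n. c j i *\<^sub>R x i))"
  have Gj: "G $ j = (\<Sum>i<n. c j i *\<^sub>R x i)" for j unfolding G_def by simp
  have D: "(emp_loss \<phi> a n x y has_derivative (\<lambda>H. G \<bullet> H)) (at W)"
  proof (rule has_derivative_eq_rhs[OF loss_deriv[OF deriv]], rule ext)
    fix H :: "real^'d^'m"
    have "G \<bullet> H = (\<Sum>j\<in>UNIV. (G $ j) \<bullet> (H $ j))" by (rule inner_vec_def)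
    also have "\<dots> = (\<Sum>j\<in>UNIV. \<Sum>i<n. c j i * (x i \<bullet> H $ j))"
      unfolding Gj by (simp add: inner_sum_left)
    also have "\<dots> = (\<Sum>i<n. \<Sum>j\<in>UNIV. c j i * (x i \<bullet> H $ j))" by (rule sum.swap)
    also have "\<dots> = (1 / real n) * (\<Sum>i<n. (y i * (\<Sum>j\<in>UNIV. a j * ((H $ j) \<bullet> x i * \<phi>' ((W $ j) \<bullet> x i))))
        * (-1/(1+exp (y i * net \<phi> a W (x i)))))"
      unfolding c_def g_def d_def
      by (simp add: sum_distrib_left sum_distrib_right inner_commute mult_ac)
    finally show "(1 / real n) * (\<Sum>i<n. (y i * (\<Sum>j\<in>UNIV. a j * ((H $ j) \<bullet> x i * \<phi>' ((W $ j) \<bullet> x i))))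
        * (-1/(1+exp (y i * net \<phi> a W (x i))))) = G \<bullet> H" by simp
  qed
  define R where "R = Rmax n x / Rmin n x"
  define K where "K = 5 * \<gamma> powr (-2) * (10 * R\<^sup>2 * \<gamma> powr (-2) + 10)"
  define m where "m = real CARD('m)"
  have m0: "m > 0" unfolding m_def by simp
  have gp: "\<gamma> powr (-2) = 1 / \<gamma>\<^sup>2" using gamma by (simp add: powr_minus powr_realpow divide_inverse)
  have gp1: "\<gamma> powr (-2) \<ge> 1"
  proof -
    have "\<gamma>\<^sup>2 \<le> 1" using gamma by (simp add: power_le_one)
    then show ?thesis unfolding gp using gamma by (simp add: field_simps)
  qed
  have K2: "K \<ge> 2"
  proof -
    have "10 * R\<^sup>2 * \<gamma> powr (-2) + 10 \<ge> 10" using gp1 by simp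
    then have "5 * \<gamma> powr (-2) * (10 * R\<^sup>2 * \<gamma> powr (-2) + 10) \<ge> 5 * 1 * 10"
      using gp1 by (intro mult_mono) auto
    then show ?thesis unfolding K_def by simp
  qed
  have fin: "finite ((\<lambda>i. norm (x i)) ` {..<n})" by simp
  have Rmin_le: "Rmin n x \<le> norm (x i)" if "i < n" for i
    unfolding Rmin_def using that by (intro Min_le fin) auto
  have Rmax_ge: "norm (x i) \<le> Rmax n x" if "i < n" for i
    unfolding Rmax_def using that by (intro Max_ge fin) auto
  have R1: "R \<ge> 1"
    unfolding R_def using Rmin_le[of 0] Rmax_ge[of 0] n_pos Rmin_pos by simp
  have hyp: "\<bar>x i \<bullet> x k\<bar> * (K * real n) \<le> (norm (x i))\<^sup>2" if "i<n" "k<n" "k\<noteq>i" for i k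
    using sep[OF that] unfolding K_def R_def by (simp add: mult_ac)
  have g0: "g i > 0" for i unfolding g_def by (simp add: add_pos_pos)
  have a2: "(a j)\<^sup>2 = 1 / m" for j
    using a_def[of j] unfolding m_def by (auto simp: power_divide)
  have d2: "(d i j)\<^sup>2 \<ge> \<gamma>\<^sup>2" for i j
    using dbound[of "(W $ j) \<bullet> x i"] gamma unfolding d_def by (intro power_mono) auto
  have cterm: "(c j i)\<^sup>2 * (norm (x i))\<^sup>2 \<ge> (\<gamma>\<^sup>2 * (Rmin n x)\<^sup>2 / (real n ^ 2 * m)) * (g i)\<^sup>2"
    if "i < n" for i j
  proof -
    have y2: "(y i)\<^sup>2 = 1" using labels[OF that] by auto
    have "(c j i)\<^sup>2 = (g i)\<^sup>2 / (real n ^ 2 * m) * (d i j)\<^sup>2"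
      unfolding c_def by (simp add: power_mult_distrib y2 a2 power_divide)
    then have "(c j i)\<^sup>2 * (norm (x i))\<^sup>2 = (g i)\<^sup>2 / (real n ^ 2 * m) * ((d i j)\<^sup>2 * (norm (x i))\<^sup>2)"
      by simp
    also have "\<dots> \<ge> (g i)\<^sup>2 / (real n ^ 2 * m) * (\<gamma>\<^sup>2 * (Rmin n x)\<^sup>2)"
    proof (rule mult_left_mono)
      have "(Rmin n x)\<^sup>2 \<le> (norm (x i))\<^sup>2" using Rmin_le[OF that] Rmin_pos by (intro power_mono) auto
      then show "\<gamma>\<^sup>2 * (Rmin n x)\<^sup>2 \<le> (d i j)\<^sup>2 * (norm (x i))\<^sup>2"
        using d2[of i j] by (intro mult_mono) auto
    qed (use m0 in auto)
    finally show ?thesis by (simp add: field_simps)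
  qed
  have Gj2: "(norm (G $ j))\<^sup>2 \<ge> (1/2) * (\<gamma>\<^sup>2 * (Rmin n x)\<^sup>2 / (real n ^ 2 * m)) * (\<Sum>i<n. (g i)\<^sup>2)" for j
  proof -
    have "(norm (G $ j))\<^sup>2 \<ge> (1/2) * (\<Sum>i<n. (c j i)\<^sup>2 * (norm (x i))\<^sup>2)"
      unfolding Gj by (rule quad_lower[OF K2 n_pos hyp])
    moreover have "(\<Sum>i<n. (c j i)\<^sup>2 * (norm (x i))\<^sup>2) \<ge> (\<Sum>i<n. (\<gamma>\<^sup>2 * (Rmin n x)\<^sup>2 / (real n ^ 2 * m)) * (g i)\<^sup>2)"
      by (intro sum_mono cterm) auto
    moreover have "(1/2) * (\<gamma>\<^sup>2 * (Rmin n x)\<^sup>2 / (real n ^ 2 * m)) * (\<Sum>i<n. (g i)\<^sup>2)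
       = (1/2) * (\<Sum>i<n. (\<gamma>\<^sup>2 * (Rmin n x)\<^sup>2 / (real n ^ 2 * m)) * (g i)\<^sup>2)"
      by (simp add: sum_distrib_left)
    ultimately show ?thesis by linarith
  qed
  have normG2: "(norm G)\<^sup>2 = (\<Sum>j\<in>UNIV. (norm (G $ j))\<^sup>2)"
    unfolding power2_norm_eq_inner by (rule inner_vec_def)
  have "(norm G)\<^sup>2 \<ge> (\<Sum>j\<in>(UNIV::'m set). (1/2) * (\<gamma>\<^sup>2 * (Rmin n x)\<^sup>2 / (real n ^ 2 * m)) * (\<Sum>i<n. (g i)\<^sup>2))"
    unfolding normG2 by (intro sum_mono Gj2)
  also have "(\<Sum>j\<in>(UNIV::'m set). (1/2) * (\<gamma>\<^sup>2 * (Rmin n x)\<^sup>2 / (real n ^ 2 * m)) * (\<Sum>i<n. (g i)\<^sup>2))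
      = (1/2) * (\<gamma>\<^sup>2 * (Rmin n x)\<^sup>2 / (real n ^ 2)) * (\<Sum>i<n. (g i)\<^sup>2)"
    using m0 unfolding m_def by simp
  finally have nG: "(norm G)\<^sup>2 \<ge> (1/2) * (\<gamma>\<^sup>2 * (Rmin n x)\<^sup>2 / (real n ^ 2)) * (\<Sum>i<n. (g i)\<^sup>2)" .
  define Gh where "Gh = emp_G \<phi> a n x y W"
  have Gh_def': "Gh = (1 / real n) * (\<Sum>i<n. g i)" unfolding Gh_def emp_G_def g_def by simp
  have Gh0: "Gh \<ge> 0" unfolding Gh_def' using g0 by (simp add: sum_nonneg less_imp_le)
  have CS: "(\<Sum>i<n. g i)\<^sup>2 \<le> (\<Sum>i<n. (g i)\<^sup>2) * real n"
    using sum_squared_le_sum_of_squares[of g "{..<n}"] by simp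
  have np: "real n > 0" using n_pos by simp
  have "(\<Sum>i<n. (g i)\<^sup>2) \<ge> real n * Gh\<^sup>2"
  proof -
    have "real n * Gh\<^sup>2 = (\<Sum>i<n. g i)\<^sup>2 / real n" unfolding Gh_def' using np
      by (simp add: power2_eq_square field_simps)
    also have "\<dots> \<le> (\<Sum>i<n. (g i)\<^sup>2)" using CS np by (simp add: field_simps)
    finally show ?thesis .
  qed
  then have "(1/2) * (\<gamma>\<^sup>2 * (Rmin n x)\<^sup>2 / (real n ^ 2)) * (\<Sum>i<n. (g i)\<^sup>2)
      \<ge> (1/2) * (\<gamma>\<^sup>2 * (Rmin n x)\<^sup>2 / (real n ^ 2)) * (real n * Gh\<^sup>2)"
    by (intro mult_left_mono) auto
  moreover have "(1/2) * (\<gamma>\<^sup>2 * (Rmin n x)\<^sup>2 / (real n ^ 2)) * (real n * Gh\<^sup>2)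
      = \<gamma>\<^sup>2 * (Rmin n x)\<^sup>2 * Gh\<^sup>2 / (2 * real n)"
    using np by (simp add: power2_eq_square field_simps)
  ultimately have nG2: "(norm G)\<^sup>2 \<ge> \<gamma>\<^sup>2 * (Rmin n x)\<^sup>2 * Gh\<^sup>2 / (2 * real n)"
    using nG by linarith
  define T where "T = \<gamma> * Rmin n x / (2 * sqrt 2 * R * sqrt (real n)) * Gh"
  have T0: "T \<ge> 0" unfolding T_def using gamma Rmin_pos R1 Gh0 by simp
  have "T\<^sup>2 = \<gamma>\<^sup>2 * (Rmin n x)\<^sup>2 * Gh\<^sup>2 / (8 * R\<^sup>2 * real n)"
    unfolding T_def using np by (simp add: power_mult_distrib power_divide)
  also have "\<dots> \<le> \<gamma>\<^sup>2 * (Rmin n x)\<^sup>2 * Gh\<^sup>2 / (2 * real n)"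
  proof (rule divide_left_mono)
    have "R\<^sup>2 \<ge> 1" using R1 by (simp add: one_le_power)
    then show "2 * real n \<le> 8 * R\<^sup>2 * real n" using np by simp
  qed (use np R1 in auto)
  finally have "T\<^sup>2 \<le> (norm G)\<^sup>2" using nG2 by linarith
  then have "T \<le> norm G" by (rule power2_le_imp_le) simp
  then show ?thesis using D unfolding T_def Gh_def R_def by blast
qed

end
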